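(* Let $(X,(\cdot,\cdot|\cdot))$ be a 2-inner product space over $\mathbb{K}\in\{\mathbb{R},\mathbb{C}\}$, let $n$ be a positive integer, let $x,y_1,\dots,y_n,z\in X$ and $c_1,\dots,c_n\in\mathbb{K}$. Then $\big|\sum_{i=1}^n c_i(x,y_i|z)\big|^2$ is bounded above by each of the following four quantities: (a) $\|x|z\|^2\sum_{i=1}^n|c_i|^2\Big\{\max_{1\le i\le n}\|y_i|z\|^2+\big(\sum_{1\le i\ne j\le n}|(y_i,y_j|z)|^2\big)^{1/2}\Big\}$; (b) $\|x|z\|^2\max_{1\le i\le n}|c_i|^2\Big\{\sum_{i=1}^n\|y_i|z\|^2+\sum_{1\le i\ne j\le n}|(y_i,y_j|z)|\Big\}$; (c) for any $p>1$, $\frac1p+\frac1q=1$: $\|x|z\|^2\big(\sum_{i=1}^n|c_i|^{2p}\big)^{1/p}\Big\{\big(\sum_{i=1}^n\|y_i|z\|^{2q}\big)^{1/q}+(n-1)^{1/p}\big(\sum_{1\le i\ne j\le n}|(y_i,y_j|z)|^{q}\big)^{1/q}\Big\}$; (d) $\|x|z\|^2\sum_{i=1}^n|c_i|^2\Big\{\max_{1\le i\le n}\|y_i|z\|^2+(n-1)\max_{1\le i\ne j\le n}|(y_i,y_j|z)|\Big\}$.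
   Context: A 2-inner product on a linear space $X$ of dimension greater than $1$ over $\mathbb{K}$ ($\mathbb{K}=\mathbb{R}$ or $\mathbb{C}$) is a function $(\cdot,\cdot|\cdot):X\times X\times X\to\mathbb{K}$ such that for all $x,x',y,z\in X$ and $\alpha\in\mathbb{K}$: (i) $(x,x|z)\ge 0$, and $(x,x|z)=0$ iff $x$ and $z$ are linearly dependent; (ii) $(x,x|z)=(z,z|x)$; (iii) $(y,x|z)=\overline{(x,y|z)}$; (iv) $(\alpha x,y|z)=\alpha(x,y|z)$; (v) $(x+x',y|z)=(x,y|z)+(x',y|z)$. The associated 2-norm is $\|x|z\|=\sqrt{(x,x|z)}$. Sums and maxima indexed by $1\le i\ne j\le n$ run over all ordered pairs $(i,j)$ with $i\ne j$. *)

theory Defs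
  imports Complex_Main
begin

text \<open>Linear dependence of the pair (x, z) (as a family, so x = z counts as dependent).\<close>

definition lindep_R :: "'a::real_vector \<Rightarrow> 'a \<Rightarrow> bool" where
  "lindep_R x z \<longleftrightarrow> (\<exists>a b::real. (a \<noteq> 0 \<or> b \<noteq> 0) \<and> a *\<^sub>R x + b *\<^sub>R z = 0)"

text \<open>There is no complex-vector-space type class in the distribution; a complex linear space is
  given by a scalar multiplication sc satisfying the locale vector_space.\<close>

definition lindep_C :: "(complex \<Rightarrow> 'a::ab_group_add \<Rightarrow> 'a) \<Rightarrow> 'a \<Rightarrow> 'a \<Rightarrow> bool" where
  "lindep_C sc x z \<longleftrightarrow> (\<exists>a b::complex. (a \<noteq> 0 \<or> b \<noteq> 0) \<and> sc a x + sc b z = 0)"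

definition two_inner_R :: "('a::real_vector \<Rightarrow> 'a \<Rightarrow> 'a \<Rightarrow> real) \<Rightarrow> bool" where
  "two_inner_R ip \<longleftrightarrow>
     (\<exists>u v::'a. \<not> lindep_R u v) \<and>
     (\<forall>x z. 0 \<le> ip x x z \<and> (ip x x z = 0 \<longleftrightarrow> lindep_R x z)) \<and>
     (\<forall>x z. ip x x z = ip z z x) \<and>
     (\<forall>x y z. ip y x z = ip x y z) \<and>
     (\<forall>(a::real) x y z. ip (a *\<^sub>R x) y z = a * ip x y z) \<and>
     (\<forall>x x' y z. ip (x + x') y z = ip x y z + ip x' y z)"

definition two_inner_C :: "(complex \<Rightarrow> 'a::ab_group_add \<Rightarrow> 'a) \<Rightarrow> ('a \<Rightarrow> 'a \<Rightarrow> 'a \<Rightarrow> complex) \<Rightarrow> bool" where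
  "two_inner_C sc ip \<longleftrightarrow>
     vector_space sc \<and>
     (\<exists>u v::'a. \<not> lindep_C sc u v) \<and>
     (\<forall>x z. Im (ip x x z) = 0 \<and> 0 \<le> Re (ip x x z) \<and> (ip x x z = 0 \<longleftrightarrow> lindep_C sc x z)) \<and>
     (\<forall>x z. ip x x z = ip z z x) \<and>
     (\<forall>x y z. ip y x z = cnj (ip x y z)) \<and>
     (\<forall>(a::complex) x y z. ip (sc a x) y z = a * ip x y z) \<and>
     (\<forall>x x' y z. ip (x + x') y z = ip x y z + ip x' y z)"

definition tnorm_R :: "('a::real_vector \<Rightarrow> 'a \<Rightarrow> 'a \<Rightarrow> real) \<Rightarrow> 'a \<Rightarrow> 'a \<Rightarrow> real" where
  "tnorm_R ip x z = sqrt (ip x x z)"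

definition tnorm_C :: "('a \<Rightarrow> 'a \<Rightarrow> 'a \<Rightarrow> complex) \<Rightarrow> 'a \<Rightarrow> 'a \<Rightarrow> real" where
  "tnorm_C ip x z = sqrt (Re (ip x x z))"

definition offdiag :: "nat \<Rightarrow> (nat \<times> nat) set" where
  "offdiag n = {(i, j). i \<in> {1..n} \<and> j \<in> {1..n} \<and> i \<noteq> j}"

text \<open>Parameters: nx = \<parallel>x|z\<parallel>, a i = |c_i|, ny i = \<parallel>y_i|z\<parallel>, g i j = |(y_i,y_j|z)|.\<close>

definition boundA :: "nat \<Rightarrow> real \<Rightarrow> (nat \<Rightarrow> real) \<Rightarrow> (nat \<Rightarrow> real) \<Rightarrow> (nat \<Rightarrow> nat \<Rightarrow> real) \<Rightarrow> real" where
  "boundA n nx a ny g =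
     nx\<^sup>2 * (\<Sum>i=1..n. (a i)\<^sup>2) *
       (Max {(ny i)\<^sup>2 | i. i \<in> {1..n}} + sqrt (\<Sum>(i, j)\<in>offdiag n. (g i j)\<^sup>2))"

definition boundB :: "nat \<Rightarrow> real \<Rightarrow> (nat \<Rightarrow> real) \<Rightarrow> (nat \<Rightarrow> real) \<Rightarrow> (nat \<Rightarrow> nat \<Rightarrow> real) \<Rightarrow> real" where
  "boundB n nx a ny g =
     nx\<^sup>2 * Max {(a i)\<^sup>2 | i. i \<in> {1..n}} *
       ((\<Sum>i=1..n. (ny i)\<^sup>2) + (\<Sum>(i, j)\<in>offdiag n. g i j))"

definition boundC :: "real \<Rightarrow> real \<Rightarrow> nat \<Rightarrow> real \<Rightarrow> (nat \<Rightarrow> real) \<Rightarrow> (nat \<Rightarrow> real) \<Rightarrow> (nat \<Rightarrow> nat \<Rightarrow> real) \<Rightarrow> real" where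
  "boundC p q n nx a ny g =
     nx\<^sup>2 * (\<Sum>i=1..n. a i powr (2 * p)) powr (1 / p) *
       ((\<Sum>i=1..n. ny i powr (2 * q)) powr (1 / q)
        + real (n - 1) powr (1 / p) * (\<Sum>(i, j)\<in>offdiag n. g i j powr q) powr (1 / q))"

definition boundD :: "nat \<Rightarrow> real \<Rightarrow> (nat \<Rightarrow> real) \<Rightarrow> (nat \<Rightarrow> real) \<Rightarrow> (nat \<Rightarrow> nat \<Rightarrow> real) \<Rightarrow> real" where
  "boundD n nx a ny g =
     nx\<^sup>2 * (\<Sum>i=1..n. (a i)\<^sup>2) *
       (Max {(ny i)\<^sup>2 | i. i \<in> {1..n}} + real (n - 1) * Max {g i j | i j. (i, j) \<in> offdiag n})"

end

theory Submission
  imports Defs "HOL-Analysis.Analysis"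
begin


lemma holder_sum:
  fixes u v :: "'i \<Rightarrow> real"
  assumes fin: "finite I" and u0: "\<And>i. i\<in>I \<Longrightarrow> u i \<ge> 0" and v0: "\<And>i. i\<in>I \<Longrightarrow> v i \<ge> 0"
    and p: "p > 1" and pq: "1/p + 1/q = 1"
  shows "(\<Sum>i\<in>I. u i * v i) \<le> (\<Sum>i\<in>I. u i powr p) powr (1/p) * (\<Sum>i\<in>I. v i powr q) powr (1/q)"
proof -
  have q: "q > 1"
  proof -
    have "1/q = 1 - 1/p" using pq by simp
    moreover have "0 < 1 - 1/p" "1 - 1/p < 1" using p by (auto simp: field_simps)
    ultimately have "0 < 1/q" "1/q < 1" by auto
    then show ?thesis by (simp add: field_simps split: if_splits)
  qed
  define SA where "SA = (\<Sum>i\<in>I. u i powr p)"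
  define SB where "SB = (\<Sum>i\<in>I. v i powr q)"
  have SA0: "SA \<ge> 0" unfolding SA_def by (simp add: sum_nonneg)
  have SB0: "SB \<ge> 0" unfolding SB_def by (simp add: sum_nonneg)
  have rhs0: "0 \<le> SA powr (1/p) * SB powr (1/q)" by simp
  show ?thesis
  proof (cases "SA = 0 \<or> SB = 0")
    case True
    then have "(\<forall>i\<in>I. u i = 0) \<or> (\<forall>i\<in>I. v i = 0)"
      unfolding SA_def SB_def using fin p q
      by (subst (asm) sum_nonneg_eq_0_iff; auto)+
    then have "(\<Sum>i\<in>I. u i * v i) = 0" by auto
    then show ?thesis using rhs0 SA_def SB_def by simp
  next
    case False
    then have SAp: "SA > 0" and SBp: "SB > 0" using SA0 SB0 by auto
    define A where "A = SA powr (1/p)"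
    define B where "B = SB powr (1/q)"
    have Ap: "A > 0" and Bp: "B > 0" using SAp SBp by (auto simp: A_def B_def)
    have Ap': "A powr p = SA" using SAp p by (simp add: A_def powr_powr)
    have Bq': "B powr q = SB" using SBp q by (simp add: B_def powr_powr)
    have "(\<Sum>i\<in>I. (u i / A) * (v i / B)) \<le> (\<Sum>i\<in>I. (u i / A) powr p / p + (v i / B) powr q / q)"
      by (rule sum_mono, rule Youngs_inequality) (use p q pq u0 v0 Ap Bp in auto)
    also have "\<dots> = (\<Sum>i\<in>I. u i powr p / (p * SA) + v i powr q / (q * SB))"
      by (rule sum.cong) (use u0 v0 Ap Bp Ap' Bq' in \<open>auto simp: powr_divide mult.commute\<close>)
    also have "\<dots> = SA / (p * SA) + SB / (q * SB)"
      by (simp add: sum.distrib SA_def SB_def flip: sum_divide_distrib)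
    also have "\<dots> = 1" using SAp SBp pq by simp
    finally have "(\<Sum>i\<in>I. u i * v i) / (A * B) \<le> 1"
      by (simp add: sum_divide_distrib)
    then have "(\<Sum>i\<in>I. u i * v i) \<le> A * B" using Ap Bp by (simp add: divide_le_eq)
    then show ?thesis by (simp add: A_def B_def SA_def SB_def)
  qed
qed

lemma offdiag_Sigma: "offdiag n = Sigma {1..n} (\<lambda>i. {1..n} - {i})"
  by (auto simp: offdiag_def)

lemma finite_offdiag[simp]: "finite (offdiag n)"
  by (simp add: offdiag_Sigma)

lemma offdiag_sub: "offdiag n \<subseteq> {1..n} \<times> {1..n}"
  by (auto simp: offdiag_def)

lemma offdiag_swap: "(\<Sum>(i,j)\<in>offdiag n. h i j) = (\<Sum>(i,j)\<in>offdiag n. h j i :: real)"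
proof -
  have "prod.swap ` offdiag n = offdiag n" by (auto simp: offdiag_def image_iff)
  moreover have "inj_on prod.swap (offdiag n)" by simp
  ultimately show ?thesis
    by (metis (no_types, lifting) case_prod_beta fst_swap snd_swap sum.reindex_cong)
qed

lemma offdiag_fst: "(\<Sum>(i,j)\<in>offdiag n. f i) = real (n - 1) * (\<Sum>i=1..n. f i :: real)"
proof -
  have "(\<Sum>(i,j)\<in>offdiag n. f i) = (\<Sum>i=1..n. \<Sum>j\<in>{1..n}-{i}. f i)"
    unfolding offdiag_Sigma by (rule sum.Sigma[symmetric]) auto
  also have "\<dots> = (\<Sum>i=1..n. real (n - 1) * f i)"
    by (rule sum.cong) auto
  finally show ?thesis by (simp add: sum_distrib_left)
qed

lemma offdiag_snd: "(\<Sum>(i,j)\<in>offdiag n. f j) = real (n - 1) * (\<Sum>i=1..n. f i :: real)"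
  using offdiag_swap[of "\<lambda>i j. f j" n] offdiag_fst[of f n] by simp

lemma offdiag_amgm:
  assumes "\<And>i. a i \<ge> (0::real)"
  shows "(\<Sum>(i,j)\<in>offdiag n. a i * a j) \<le> real (n - 1) * (\<Sum>i=1..n. (a i)\<^sup>2)"
proof -
  have "(\<Sum>(i,j)\<in>offdiag n. a i * a j) \<le> (\<Sum>(i,j)\<in>offdiag n. (a i)\<^sup>2 / 2 + (a j)\<^sup>2 / 2)"
  proof (rule sum_mono, clarify)
    fix i j
    have "0 \<le> (a i - a j)\<^sup>2" by simp
    then show "a i * a j \<le> (a i)\<^sup>2 / 2 + (a j)\<^sup>2 / 2" by (simp add: power2_eq_square algebra_simps)
  qed
  also have "\<dots> = (\<Sum>(i,j)\<in>offdiag n. (a i)\<^sup>2 / 2) + (\<Sum>(i,j)\<in>offdiag n. (a j)\<^sup>2 / 2)"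
    by (simp add: sum.distrib split_def)
  also have "\<dots> = real (n - 1) * (\<Sum>i=1..n. (a i)\<^sup>2 / 2) + real (n - 1) * (\<Sum>i=1..n. (a i)\<^sup>2 / 2)"
    by (simp only: offdiag_fst[of "\<lambda>i. (a i)\<^sup>2 / 2"] offdiag_snd[of "\<lambda>i. (a i)\<^sup>2 / 2"])
  also have "\<dots> = real (n - 1) * (\<Sum>i=1..n. (a i)\<^sup>2)"
    by (simp flip: sum_divide_distrib)
  finally show ?thesis .
qed

lemma sq_powr: "(x::real) \<ge> 0 \<Longrightarrow> (x\<^sup>2) powr r = x powr (2 * r)"
proof (cases "x = 0")
  case False
  assume "x \<ge> 0"
  then have "x > 0" using False by simp
  then have "x\<^sup>2 = x powr 2" by (simp add: powr_numeral)
  then show ?thesis by (simp only: powr_powr)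
qed simp


lemma bnd_A:
  fixes a ny :: "nat \<Rightarrow> real" and g :: "nat \<Rightarrow> nat \<Rightarrow> real"
  assumes n: "0 < n" and a0: "\<And>i. a i \<ge> 0" and g0: "\<And>i j. g i j \<ge> 0"
  shows "(\<Sum>i=1..n. (a i)\<^sup>2 * (ny i)\<^sup>2) + (\<Sum>(i,j)\<in>offdiag n. a i * a j * g i j)
     \<le> (\<Sum>i=1..n. (a i)\<^sup>2) * (Max {(ny i)\<^sup>2 | i. i \<in> {1..n}} + sqrt (\<Sum>(i, j)\<in>offdiag n. (g i j)\<^sup>2))"
proof -
  define M where "M = Max {(ny i)\<^sup>2 | i. i \<in> {1..n}}"
  have setM: "{(ny i)\<^sup>2 | i. i \<in> {1..n}} = (\<lambda>i. (ny i)\<^sup>2) ` {1..n}" by auto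
  have D: "(\<Sum>i=1..n. (a i)\<^sup>2 * (ny i)\<^sup>2) \<le> (\<Sum>i=1..n. (a i)\<^sup>2) * M"
    unfolding sum_distrib_right
  proof (rule sum_mono)
    fix i assume "i \<in> {1..n}"
    then have "(ny i)\<^sup>2 \<le> M" unfolding M_def setM by (intro Max_ge) auto
    then show "(a i)\<^sup>2 * (ny i)\<^sup>2 \<le> (a i)\<^sup>2 * M" by (simp add: mult_left_mono)
  qed
  define Off where "Off = (\<Sum>(i,j)\<in>offdiag n. a i * a j * g i j)"
  define G where "G = (\<Sum>(i, j)\<in>offdiag n. (g i j)\<^sup>2)"
  have Off0: "Off \<ge> 0" unfolding Off_def using a0 g0 by (intro sum_nonneg) auto
  have CS: "Off\<^sup>2 \<le> (\<Sum>(i,j)\<in>offdiag n. (a i * a j)\<^sup>2) * G"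
    unfolding Off_def G_def split_def by (rule Cauchy_Schwarz_ineq_sum)
  have "(\<Sum>(i,j)\<in>offdiag n. (a i * a j)\<^sup>2) \<le> (\<Sum>(i,j)\<in>{1..n}\<times>{1..n}. (a i * a j)\<^sup>2)"
    by (rule sum_mono2) (use offdiag_sub in auto)
  also have "\<dots> = (\<Sum>(i,j)\<in>{1..n}\<times>{1..n}. (a i)\<^sup>2 * (a j)\<^sup>2)"
    by (simp only: power_mult_distrib)
  also have "\<dots> = (\<Sum>i=1..n. \<Sum>j=1..n. (a i)\<^sup>2 * (a j)\<^sup>2)"
    by (rule sum.cartesian_product[symmetric])
  also have "\<dots> = (\<Sum>i=1..n. (a i)\<^sup>2) * (\<Sum>j=1..n. (a j)\<^sup>2)"
    by (rule sum_product[symmetric])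
  also have "\<dots> = (\<Sum>i=1..n. (a i)\<^sup>2)\<^sup>2"
    by (simp only: power2_eq_square)
  finally have H: "(\<Sum>(i,j)\<in>offdiag n. (a i * a j)\<^sup>2) \<le> (\<Sum>i=1..n. (a i)\<^sup>2)\<^sup>2" .
  have G0: "G \<ge> 0" unfolding G_def by (rule sum_nonneg) auto
  have "Off\<^sup>2 \<le> (\<Sum>i=1..n. (a i)\<^sup>2)\<^sup>2 * G"
    by (rule order_trans[OF CS mult_right_mono[OF H G0]])
  then have "sqrt (Off\<^sup>2) \<le> sqrt ((\<Sum>i=1..n. (a i)\<^sup>2)\<^sup>2 * G)" by (rule real_sqrt_le_mono)
  also have "\<dots> = \<bar>\<Sum>i=1..n. (a i)\<^sup>2\<bar> * sqrt G" by (simp only: real_sqrt_mult real_sqrt_abs)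
  also have "\<bar>\<Sum>i=1..n. (a i)\<^sup>2\<bar> = (\<Sum>i=1..n. (a i)\<^sup>2)" by (rule abs_of_nonneg, rule sum_nonneg) simp
  also have "sqrt (Off\<^sup>2) = Off" using Off0 by (simp only: real_sqrt_abs abs_of_nonneg)
  finally have O: "Off \<le> (\<Sum>i=1..n. (a i)\<^sup>2) * sqrt G" .
  have "(\<Sum>i=1..n. (a i)\<^sup>2) * (M + sqrt G) = (\<Sum>i=1..n. (a i)\<^sup>2) * M + (\<Sum>i=1..n. (a i)\<^sup>2) * sqrt G"
    by (rule distrib_left)
  with D O show ?thesis unfolding M_def[symmetric] Off_def[symmetric] G_def[symmetric] by linarith
qed


lemma bnd_B:
  fixes a ny :: "nat \<Rightarrow> real" and g :: "nat \<Rightarrow> nat \<Rightarrow> real"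
  assumes n: "0 < n" and a0: "\<And>i. a i \<ge> 0" and g0: "\<And>i j. g i j \<ge> 0"
  shows "(\<Sum>i=1..n. (a i)\<^sup>2 * (ny i)\<^sup>2) + (\<Sum>(i,j)\<in>offdiag n. a i * a j * g i j)
     \<le> Max {(a i)\<^sup>2 | i. i \<in> {1..n}} * ((\<Sum>i=1..n. (ny i)\<^sup>2) + (\<Sum>(i, j)\<in>offdiag n. g i j))"
proof -
  define M where "M = Max {(a i)\<^sup>2 | i. i \<in> {1..n}}"
  have setM: "{(a i)\<^sup>2 | i. i \<in> {1..n}} = (\<lambda>i. (a i)\<^sup>2) ` {1..n}" by auto
  have Mi: "(a i)\<^sup>2 \<le> M" if "i \<in> {1..n}" for i
    unfolding M_def setM using that by (intro Max_ge) auto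
  have D: "(\<Sum>i=1..n. (a i)\<^sup>2 * (ny i)\<^sup>2) \<le> M * (\<Sum>i=1..n. (ny i)\<^sup>2)"
    unfolding sum_distrib_left
    by (rule sum_mono) (use Mi in \<open>simp add: mult_right_mono\<close>)
  have O: "(\<Sum>(i,j)\<in>offdiag n. a i * a j * g i j) \<le> M * (\<Sum>(i, j)\<in>offdiag n. g i j)"
    unfolding sum_distrib_left
  proof (rule sum_mono, clarify)
    fix i j assume ij: "(i, j) \<in> offdiag n"
    then have "i \<in> {1..n}" "j \<in> {1..n}" by (auto simp: offdiag_def)
    then have "(a i)\<^sup>2 \<le> M" "(a j)\<^sup>2 \<le> M" using Mi by auto
    moreover have "0 \<le> (a i - a j)\<^sup>2" by simp
    ultimately have "a i * a j \<le> M" by (simp add: power2_eq_square algebra_simps)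
    then show "a i * a j * g i j \<le> M * g i j" using g0 by (simp add: mult_right_mono)
  qed
  from D O show ?thesis by (simp add: M_def distrib_left)
qed


lemma bnd_D:
  fixes a ny :: "nat \<Rightarrow> real" and g :: "nat \<Rightarrow> nat \<Rightarrow> real"
  assumes n: "0 < n" and a0: "\<And>i. a i \<ge> 0" and g0: "\<And>i j. g i j \<ge> 0"
  shows "(\<Sum>i=1..n. (a i)\<^sup>2 * (ny i)\<^sup>2) + (\<Sum>(i,j)\<in>offdiag n. a i * a j * g i j)
     \<le> (\<Sum>i=1..n. (a i)\<^sup>2) * (Max {(ny i)\<^sup>2 | i. i \<in> {1..n}} + real (n - 1) * Max {g i j | i j. (i, j) \<in> offdiag n})"
proof -
  define M where "M = Max {(ny i)\<^sup>2 | i. i \<in> {1..n}}"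
  have setM: "{(ny i)\<^sup>2 | i. i \<in> {1..n}} = (\<lambda>i. (ny i)\<^sup>2) ` {1..n}" by auto
  have D: "(\<Sum>i=1..n. (a i)\<^sup>2 * (ny i)\<^sup>2) \<le> (\<Sum>i=1..n. (a i)\<^sup>2) * M"
    unfolding sum_distrib_right
  proof (rule sum_mono)
    fix i assume "i \<in> {1..n}"
    then have "(ny i)\<^sup>2 \<le> M" unfolding M_def setM by (intro Max_ge) auto
    then show "(a i)\<^sup>2 * (ny i)\<^sup>2 \<le> (a i)\<^sup>2 * M" by (simp add: mult_left_mono)
  qed
  define MG where "MG = Max {g i j | i j. (i, j) \<in> offdiag n}"
  have O: "(\<Sum>(i,j)\<in>offdiag n. a i * a j * g i j) \<le> (\<Sum>i=1..n. (a i)\<^sup>2) * (real (n - 1) * MG)"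
  proof (cases "n = 1")
    case True
    then have "offdiag n = {}" by (auto simp: offdiag_def)
    then show ?thesis using True by simp
  next
    case False
    then have "(1, 2) \<in> offdiag n" using n by (auto simp: offdiag_def)
    have setG: "{g i j | i j. (i, j) \<in> offdiag n} = (\<lambda>(i,j). g i j) ` offdiag n" by auto
    have Gi: "g i j \<le> MG" if "(i,j) \<in> offdiag n" for i j
      unfolding MG_def setG using that by (intro Max_ge) auto
    have MG0: "MG \<ge> 0" using Gi[OF \<open>(1, 2) \<in> offdiag n\<close>] g0[of 1 2] by linarith
    have "(\<Sum>(i,j)\<in>offdiag n. a i * a j * g i j) \<le> (\<Sum>(i,j)\<in>offdiag n. a i * a j * MG)"
      by (rule sum_mono, clarify) (use Gi a0 in \<open>simp add: mult_left_mono\<close>)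
    also have "\<dots> = MG * (\<Sum>(i,j)\<in>offdiag n. a i * a j)"
      by (simp add: sum_distrib_left split_def mult.commute)
    also have "\<dots> \<le> MG * (real (n - 1) * (\<Sum>i=1..n. (a i)\<^sup>2))"
      by (rule mult_left_mono[OF offdiag_amgm MG0]) (use a0 in auto)
    finally show ?thesis by (simp add: algebra_simps)
  qed
  from D O show ?thesis by (simp add: M_def MG_def distrib_left)
qed


lemma bnd_C:
  fixes a ny :: "nat \<Rightarrow> real" and g :: "nat \<Rightarrow> nat \<Rightarrow> real"
  assumes n: "0 < n" and a0: "\<And>i. a i \<ge> 0" and g0: "\<And>i j. g i j \<ge> 0" and ny0: "\<And>i. ny i \<ge> 0"
    and p: "1 < p" and pq: "1 / p + 1 / q = 1"
  shows "(\<Sum>i=1..n. (a i)\<^sup>2 * (ny i)\<^sup>2) + (\<Sum>(i,j)\<in>offdiag n. a i * a j * g i j)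
     \<le> (\<Sum>i=1..n. a i powr (2 * p)) powr (1 / p) *
       ((\<Sum>i=1..n. ny i powr (2 * q)) powr (1 / q)
        + real (n - 1) powr (1 / p) * (\<Sum>(i, j)\<in>offdiag n. g i j powr q) powr (1 / q))"
proof -
  define S where "S = (\<Sum>i=1..n. a i powr (2 * p))"
  define G where "G = (\<Sum>(i, j)\<in>offdiag n. g i j powr q) powr (1 / q)"
  have D: "(\<Sum>i=1..n. (a i)\<^sup>2 * (ny i)\<^sup>2) \<le> S powr (1/p) * (\<Sum>i=1..n. ny i powr (2 * q)) powr (1 / q)"
    using holder_sum[of "{1..n}" "\<lambda>i. (a i)\<^sup>2" "\<lambda>i. (ny i)\<^sup>2" p q] p pq a0 ny0
    by (simp add: sq_powr S_def)
  have "(\<Sum>(i,j)\<in>offdiag n. a i * a j * g i j)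
      \<le> (\<Sum>(i,j)\<in>offdiag n. (a i * a j) powr p) powr (1/p) * G"
    using holder_sum[of "offdiag n" "\<lambda>x. a (fst x) * a (snd x)" "\<lambda>x. g (fst x) (snd x)" p q] p pq a0 g0
    by (simp add: split_def G_def)
  also have "(\<Sum>(i,j)\<in>offdiag n. (a i * a j) powr p) \<le> real (n - 1) * S"
  proof -
    have "(\<Sum>(i,j)\<in>offdiag n. (a i * a j) powr p) = (\<Sum>(i,j)\<in>offdiag n. a i powr p * a j powr p)"
      using a0 by (simp add: powr_mult)
    also have "\<dots> \<le> real (n - 1) * (\<Sum>i=1..n. (a i powr p)\<^sup>2)"
      by (rule offdiag_amgm) simp
    also have "(\<Sum>i=1..n. (a i powr p)\<^sup>2) = S"
      unfolding S_def by (rule sum.cong) (auto simp: power2_eq_square simp flip: powr_add)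
    finally show ?thesis .
  qed
  then have "(\<Sum>(i,j)\<in>offdiag n. (a i * a j) powr p) powr (1/p) \<le> (real (n - 1) * S) powr (1/p)"
    using p a0 by (intro powr_mono2) (auto intro: sum_nonneg)
  then have "(\<Sum>(i,j)\<in>offdiag n. (a i * a j) powr p) powr (1/p) * G \<le> (real (n - 1) * S) powr (1/p) * G"
    by (rule mult_right_mono) (simp add: G_def)
  also have "\<dots> = real (n - 1) powr (1/p) * S powr (1/p) * G"
    by (simp add: powr_mult S_def sum_nonneg)
  finally have O: "(\<Sum>(i,j)\<in>offdiag n. a i * a j * g i j) \<le> real (n - 1) powr (1/p) * S powr (1/p) * G" .
  have "S powr (1/p) * ((\<Sum>i=1..n. ny i powr (2 * q)) powr (1 / q) + real (n - 1) powr (1/p) * G)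
     = S powr (1/p) * (\<Sum>i=1..n. ny i powr (2 * q)) powr (1 / q) + real (n - 1) powr (1/p) * S powr (1/p) * G"
    by (simp only: distrib_left mult.assoc mult.left_commute)
  with D O show ?thesis unfolding S_def[symmetric] G_def[symmetric] by linarith
qed

lemma core:
  fixes a ny :: "nat \<Rightarrow> real" and g :: "nat \<Rightarrow> nat \<Rightarrow> real"
  assumes n: "0 < n" and a0: "\<And>i. a i \<ge> 0" and g0: "\<And>i j. g i j \<ge> 0" and ny0: "\<And>i. ny i \<ge> 0"
    and L: "L \<le> nx\<^sup>2 * ((\<Sum>i=1..n. (a i)\<^sup>2 * (ny i)\<^sup>2) + (\<Sum>(i,j)\<in>offdiag n. a i * a j * g i j))"
  shows "L \<le> boundA n nx a ny g \<and> L \<le> boundB n nx a ny g \<and>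
          (\<forall>p q. 1 < p \<and> 1 / p + 1 / q = 1 \<longrightarrow> L \<le> boundC p q n nx a ny g) \<and>
          L \<le> boundD n nx a ny g"
proof -
  define T where "T = (\<Sum>i=1..n. (a i)\<^sup>2 * (ny i)\<^sup>2) + (\<Sum>(i,j)\<in>offdiag n. a i * a j * g i j)"
  have nx0: "0 \<le> nx\<^sup>2" by simp
  have m: "L \<le> nx\<^sup>2 * X" if "T \<le> X" for X
    using L mult_left_mono[OF that nx0] unfolding T_def by linarith
  have A: "L \<le> boundA n nx a ny g" unfolding boundA_def mult.assoc
    by (rule m) (unfold T_def, rule bnd_A[OF n a0 g0])
  have B: "L \<le> boundB n nx a ny g" unfolding boundB_def mult.assoc
    by (rule m) (unfold T_def, rule bnd_B[OF n a0 g0])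
  have D: "L \<le> boundD n nx a ny g" unfolding boundD_def mult.assoc
    by (rule m) (unfold T_def, rule bnd_D[OF n a0 g0])
  have C: "L \<le> boundC p q n nx a ny g" if "1 < p" "1 / p + 1 / q = 1" for p q
    unfolding boundC_def mult.assoc
    by (rule m) (unfold T_def, rule bnd_C[OF n a0 g0 ny0 that])
  show ?thesis using A B C D by blast
qed



lemma quad_cs:
  fixes P T R :: real
  assumes H: "\<And>r. 0 \<le> P - 2 * r * T + r\<^sup>2 * T * R" and T0: "0 \<le> T" and R0: "0 \<le> R"
  shows "T \<le> P * R"
proof (cases "T = 0")
  case True
  have "0 \<le> P" using H[of 0] by simp
  then show ?thesis using True R0 by simp
next
  case False
  then have Tp: "T > 0" using T0 by simp
  show ?thesis
  proof (cases "R = 0")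
    case True
    have "0 \<le> P - 2 * ((P + 1) / (2 * T)) * T" using H[of "(P + 1) / (2 * T)"] True by simp
    also have "\<dots> = -1" using Tp by (simp add: field_simps)
    finally show ?thesis by simp
  next
    case False
    then have Rp: "R > 0" using R0 by simp
    have "0 \<le> P - 2 * (1 / R) * T + (1 / R)\<^sup>2 * T * R" by (rule H)
    also have "\<dots> = P - T / R" using Rp by (simp add: field_simps power2_eq_square)
    finally show ?thesis using Rp by (simp add: field_simps)
  qed
qed

lemma diag_split:
  fixes F :: "nat \<Rightarrow> nat \<Rightarrow> real"
  shows "(\<Sum>i=1..n. \<Sum>j=1..n. F i j) = (\<Sum>i=1..n. F i i) + (\<Sum>(i,j)\<in>offdiag n. F i j)"
proof -
  have "(\<Sum>i=1..n. \<Sum>j=1..n. F i j) = (\<Sum>i=1..n. F i i + (\<Sum>j\<in>{1..n}-{i}. F i j))"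
    by (rule sum.cong) (auto simp: sum.remove)
  also have "\<dots> = (\<Sum>i=1..n. F i i) + (\<Sum>i=1..n. \<Sum>j\<in>{1..n}-{i}. F i j)"
    by (rule sum.distrib)
  also have "(\<Sum>i=1..n. \<Sum>j\<in>{1..n}-{i}. F i j) = (\<Sum>(i,j)\<in>offdiag n. F i j)"
    unfolding offdiag_Sigma by (rule sum.Sigma) auto
  finally show ?thesis .
qed

lemma real_case:
  fixes ipR :: "'a::real_vector \<Rightarrow> 'a \<Rightarrow> 'a \<Rightarrow> real"
  assumes ip: "two_inner_R ipR"
  shows "\<bar>\<Sum>i=1..n. c i * ipR x (y i) z\<bar>\<^sup>2 \<le> (tnorm_R ipR x z)\<^sup>2 *
    ((\<Sum>i=1..n. (\<bar>c i\<bar>)\<^sup>2 * (tnorm_R ipR (y i) z)\<^sup>2) + (\<Sum>(i,j)\<in>offdiag n. \<bar>c i\<bar> * \<bar>c j\<bar> * \<bar>ipR (y i) (y j) z\<bar>))"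
proof -
  have pos: "\<And>u. 0 \<le> ipR u u z" using ip unfolding two_inner_R_def by blast
  have sym0: "\<forall>u v z. ipR v u z = ipR u v z" using ip unfolding two_inner_R_def by blast
  have sym: "\<And>u v. ipR u v z = ipR v u z" using sym0 by blast
  have hom0: "\<forall>(r::real) u v z. ipR (r *\<^sub>R u) v z = r * ipR u v z" using ip unfolding two_inner_R_def by blast
  have hom: "\<And>r u v. ipR (r *\<^sub>R u) v z = r * ipR u v z" using hom0 by blast
  have add0: "\<forall>u u' v z. ipR (u + u') v z = ipR u v z + ipR u' v z" using ip unfolding two_inner_R_def by blast
  have add: "\<And>u u' v. ipR (u + u') v z = ipR u v z + ipR u' v z" using add0 by blast
  have homr: "ipR u (r *\<^sub>R v) z = r * ipR u v z" for r u v
  proof -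
    have "ipR u (r *\<^sub>R v) z = ipR (r *\<^sub>R v) u z" by (rule sym)
    also have "\<dots> = r * ipR v u z" by (rule hom)
    also have "ipR v u z = ipR u v z" by (rule sym)
    finally show ?thesis .
  qed
  have addr: "ipR u (v + v') z = ipR u v z + ipR u v' z" for u v v'
  proof -
    have "ipR u (v + v') z = ipR (v + v') u z" by (rule sym)
    also have "\<dots> = ipR v u z + ipR v' u z" by (rule add)
    also have "ipR v u z = ipR u v z" by (rule sym)
    also have "ipR v' u z = ipR u v' z" by (rule sym)
    finally show ?thesis .
  qed
  have zero: "\<And>v. ipR 0 v z = 0" using hom[of 0] by simp
  have suml: "ipR (\<Sum>i\<in>I. f i) v z = (\<Sum>i\<in>I. ipR (f i) v z)" for I :: "nat set" and f v
    by (induction I rule: infinite_finite_induct) (auto simp: zero add)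
  have sumr: "ipR v (\<Sum>i\<in>I. f i) z = (\<Sum>i\<in>I. ipR v (f i) z)" for I :: "nat set" and f v
  proof -
    have "ipR v (\<Sum>i\<in>I. f i) z = ipR (\<Sum>i\<in>I. f i) v z" by (rule sym)
    also have "\<dots> = (\<Sum>i\<in>I. ipR (f i) v z)" by (rule suml)
    also have "\<dots> = (\<Sum>i\<in>I. ipR v (f i) z)" by (rule sum.cong[OF refl], rule sym)
    finally show ?thesis .
  qed
  define w where "w = (\<Sum>i=1..n. c i *\<^sub>R y i)"
  define t where "t = ipR x w z"
  define P where "P = ipR x x z"
  define R where "R = ipR w w z"
  have t: "t = (\<Sum>i=1..n. c i * ipR x (y i) z)"
    unfolding t_def w_def sumr homr ..
  have Rsum: "R = (\<Sum>i=1..n. \<Sum>j=1..n. c i * c j * ipR (y i) (y j) z)"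
    unfolding R_def w_def suml sumr hom homr
    apply (simp add: sum_distrib_left mult.assoc)
    apply (intro sum.cong refl)
    by (metis sym)
  have "\<And>r. 0 \<le> P - 2 * r * t\<^sup>2 + r\<^sup>2 * t\<^sup>2 * R"
  proof -
    fix r
    define v where "v = x + (- r * t) *\<^sub>R w"
    have e: "ipR w x z = t" unfolding t_def by (rule sym)
    have "ipR v v z = P + (- r * t) * t + (- r * t) * (t + (- r * t) * R)"
      unfolding v_def add addr hom homr e P_def[symmetric] R_def[symmetric] t_def[symmetric] by simp
    also have "\<dots> = P - 2 * r * t\<^sup>2 + r\<^sup>2 * t\<^sup>2 * R" by (simp add: power2_eq_square algebra_simps)
    finally have "ipR v v z = P - 2 * r * t\<^sup>2 + r\<^sup>2 * t\<^sup>2 * R" .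
    then show "0 \<le> P - 2 * r * t\<^sup>2 + r\<^sup>2 * t\<^sup>2 * R" using pos[of v] by simp
  qed
  then have CS: "t\<^sup>2 \<le> P * R" by (rule quad_cs) (auto simp: R_def pos)
  have "R \<le> (\<Sum>i=1..n. \<Sum>j=1..n. \<bar>c i\<bar> * \<bar>c j\<bar> * \<bar>ipR (y i) (y j) z\<bar>)"
    unfolding Rsum
    by (rule sum_mono, rule sum_mono) (simp add: abs_mult[symmetric])
  also have "\<dots> = (\<Sum>i=1..n. (\<bar>c i\<bar>)\<^sup>2 * (tnorm_R ipR (y i) z)\<^sup>2) + (\<Sum>(i,j)\<in>offdiag n. \<bar>c i\<bar> * \<bar>c j\<bar> * \<bar>ipR (y i) (y j) z\<bar>)"
    unfolding diag_split by (simp add: tnorm_R_def pos power2_eq_square)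
  finally have RS: "R \<le> \<dots>" .
  have P0: "0 \<le> P" unfolding P_def by (rule pos)
  have "\<bar>\<Sum>i=1..n. c i * ipR x (y i) z\<bar>\<^sup>2 = t\<^sup>2" unfolding t by simp
  also have "\<dots> \<le> P * R" by (rule CS)
  also have "\<dots> \<le> P * ((\<Sum>i=1..n. (\<bar>c i\<bar>)\<^sup>2 * (tnorm_R ipR (y i) z)\<^sup>2) + (\<Sum>(i,j)\<in>offdiag n. \<bar>c i\<bar> * \<bar>c j\<bar> * \<bar>ipR (y i) (y j) z\<bar>))"
    by (rule mult_left_mono[OF RS P0])
  also have "P = (tnorm_R ipR x z)\<^sup>2" unfolding tnorm_R_def P_def using pos by simp
  finally show ?thesis .
qed



lemma cs_alg:
  "Re (complex_of_real P + cnj (- (complex_of_real r * t)) * t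
        + (- (complex_of_real r * t)) * (cnj t + cnj (- (complex_of_real r * t)) * complex_of_real R))
   = P - 2 * r * (cmod t)\<^sup>2 + r\<^sup>2 * (cmod t)\<^sup>2 * R"
  unfolding cmod_power2 by (simp add: power2_eq_square algebra_simps)

lemma complex_case:
  fixes scC :: "complex \<Rightarrow> 'b::ab_group_add \<Rightarrow> 'b" and ipC :: "'b \<Rightarrow> 'b \<Rightarrow> 'b \<Rightarrow> complex"
  assumes ip: "two_inner_C scC ipC"
  shows "(cmod (\<Sum>i=1..n. c i * ipC x (y i) z))\<^sup>2 \<le> (tnorm_C ipC x z)\<^sup>2 *
    ((\<Sum>i=1..n. (cmod (c i))\<^sup>2 * (tnorm_C ipC (y i) z)\<^sup>2) + (\<Sum>(i,j)\<in>offdiag n. cmod (c i) * cmod (c j) * cmod (ipC (y i) (y j) z)))"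
proof -
  have pos: "\<And>u. 0 \<le> Re (ipC u u z)" using ip unfolding two_inner_C_def by blast
  have im0: "\<And>u. Im (ipC u u z) = 0" using ip unfolding two_inner_C_def by blast
  have realq: "ipC u u z = complex_of_real (Re (ipC u u z))" for u
    using im0[of u] by (simp add: complex_eq_iff)
  have cj0: "\<forall>u v z. ipC v u z = cnj (ipC u v z)" using ip unfolding two_inner_C_def by blast
  have cj: "\<And>u v. ipC v u z = cnj (ipC u v z)" using cj0 by blast
  have hom0: "\<forall>(r::complex) u v z. ipC (scC r u) v z = r * ipC u v z" using ip unfolding two_inner_C_def by blast
  have hom: "\<And>r u v. ipC (scC r u) v z = r * ipC u v z" using hom0 by blast
  have add0: "\<forall>u u' v z. ipC (u + u') v z = ipC u v z + ipC u' v z" using ip unfolding two_inner_C_def by blast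
  have add: "\<And>u u' v. ipC (u + u') v z = ipC u v z + ipC u' v z" using add0 by blast
  have homr: "ipC u (scC r v) z = cnj r * ipC u v z" for r u v
  proof -
    have "ipC u (scC r v) z = cnj (ipC (scC r v) u z)" by (rule cj)
    also have "\<dots> = cnj (r * ipC v u z)" by (simp only: hom)
    also have "ipC v u z = cnj (ipC u v z)" by (rule cj)
    finally show ?thesis by simp
  qed
  have addr: "ipC u (v + v') z = ipC u v z + ipC u v' z" for u v v'
  proof -
    have "ipC u (v + v') z = cnj (ipC (v + v') u z)" by (rule cj)
    also have "\<dots> = cnj (ipC v u z) + cnj (ipC v' u z)" by (simp only: add complex_cnj_add)
    also have "cnj (ipC v u z) = ipC u v z" using cj[of u v] by simp
    also have "cnj (ipC v' u z) = ipC u v' z" using cj[of u v'] by simp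
    finally show ?thesis .
  qed
  have zero: "\<And>v. ipC 0 v z = 0" using add[of 0 0] by simp
  have suml: "ipC (\<Sum>i\<in>I. f i) v z = (\<Sum>i\<in>I. ipC (f i) v z)" for I :: "nat set" and f v
    by (induction I rule: infinite_finite_induct) (auto simp: zero add)
  have sumr: "ipC v (\<Sum>i\<in>I. f i) z = (\<Sum>i\<in>I. ipC v (f i) z)" for I :: "nat set" and f v
  proof -
    have "ipC v (\<Sum>i\<in>I. f i) z = cnj (ipC (\<Sum>i\<in>I. f i) v z)" by (rule cj)
    also have "\<dots> = (\<Sum>i\<in>I. cnj (ipC (f i) v z))" by (simp only: suml cnj_sum)
    also have "\<dots> = (\<Sum>i\<in>I. ipC v (f i) z)" by (rule sum.cong[OF refl], rule cj[symmetric])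
    finally show ?thesis .
  qed
  define w where "w = (\<Sum>i=1..n. scC (cnj (c i)) (y i))"
  define t where "t = ipC x w z"
  define P where "P = Re (ipC x x z)"
  define R where "R = Re (ipC w w z)"
  have t: "t = (\<Sum>i=1..n. c i * ipC x (y i) z)"
    unfolding t_def w_def sumr homr by simp
  have Rsum: "ipC w w z = (\<Sum>i=1..n. \<Sum>j=1..n. cnj (c i) * c j * ipC (y i) (y j) z)"
    unfolding w_def suml sumr hom homr
    apply (simp add: sum_distrib_left mult.assoc)
    apply (subst sum.swap)
    apply (intro sum.cong refl)
    by (simp add: algebra_simps)
  have "\<And>r. 0 \<le> P - 2 * r * (cmod t)\<^sup>2 + r\<^sup>2 * (cmod t)\<^sup>2 * R"
  proof -
    fix r
    define s where "s = - (complex_of_real r * t)"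
    define v where "v = x + scC s w"
    have e: "ipC w x z = cnj t" unfolding t_def by (rule cj)
    have "ipC v v z = complex_of_real P + cnj s * t + s * (cnj t + cnj s * complex_of_real R)"
      unfolding v_def add addr hom homr e P_def R_def t_def[symmetric]
      apply (simp only: realq[symmetric])
      by (simp add: algebra_simps)
    then have "Re (ipC v v z) = P - 2 * r * (cmod t)\<^sup>2 + r\<^sup>2 * (cmod t)\<^sup>2 * R"
      unfolding s_def by (simp only: cs_alg)
    then show "0 \<le> P - 2 * r * (cmod t)\<^sup>2 + r\<^sup>2 * (cmod t)\<^sup>2 * R" using pos[of v] by simp
  qed
  then have CS: "(cmod t)\<^sup>2 \<le> P * R" by (rule quad_cs) (auto simp: R_def pos)
  have "R \<le> cmod (ipC w w z)" unfolding R_def by (rule complex_Re_le_cmod)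
  also have "\<dots> \<le> (\<Sum>i=1..n. cmod (\<Sum>j=1..n. cnj (c i) * c j * ipC (y i) (y j) z))"
    unfolding Rsum by (rule norm_sum)
  also have "\<dots> \<le> (\<Sum>i=1..n. \<Sum>j=1..n. cmod (c i) * cmod (c j) * cmod (ipC (y i) (y j) z))"
    by (rule sum_mono, rule order_trans[OF norm_sum], rule sum_mono) (simp add: norm_mult)
  also have "\<dots> = (\<Sum>i=1..n. (cmod (c i))\<^sup>2 * (tnorm_C ipC (y i) z)\<^sup>2) + (\<Sum>(i,j)\<in>offdiag n. cmod (c i) * cmod (c j) * cmod (ipC (y i) (y j) z))"
    unfolding diag_split by (simp add: tnorm_C_def pos power2_eq_square cmod_eq_Re im0)
  finally have RS: "R \<le> \<dots>" .
  have P0: "0 \<le> P" unfolding P_def by (rule pos)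
  have "(cmod (\<Sum>i=1..n. c i * ipC x (y i) z))\<^sup>2 = (cmod t)\<^sup>2" unfolding t by simp
  also have "\<dots> \<le> P * R" by (rule CS)
  also have "\<dots> \<le> P * ((\<Sum>i=1..n. (cmod (c i))\<^sup>2 * (tnorm_C ipC (y i) z)\<^sup>2) + (\<Sum>(i,j)\<in>offdiag n. cmod (c i) * cmod (c j) * cmod (ipC (y i) (y j) z)))"
    by (rule mult_left_mono[OF RS P0])
  also have "P = (tnorm_C ipC x z)\<^sup>2" unfolding tnorm_C_def P_def using pos by simp
  finally show ?thesis .
qed


theorem corollary3p2:
  fixes ipR :: "'a::real_vector \<Rightarrow> 'a \<Rightarrow> 'a \<Rightarrow> real"
    and scC :: "complex \<Rightarrow> 'b::ab_group_add \<Rightarrow> 'b"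
    and ipC :: "'b \<Rightarrow> 'b \<Rightarrow> 'b \<Rightarrow> complex"
  shows
  "(\<forall>n (x::'a) (y::nat \<Rightarrow> 'a) z (c::nat \<Rightarrow> real).
      two_inner_R ipR \<and> 0 < n \<longrightarrow>
      (let L = \<bar>\<Sum>i=1..n. c i * ipR x (y i) z\<bar>\<^sup>2;
           nx = tnorm_R ipR x z; a = (\<lambda>i. \<bar>c i\<bar>);
           ny = (\<lambda>i. tnorm_R ipR (y i) z); g = (\<lambda>i j. \<bar>ipR (y i) (y j) z\<bar>)
       in L \<le> boundA n nx a ny g \<and> L \<le> boundB n nx a ny g \<and>
          (\<forall>p q. 1 < p \<and> 1 / p + 1 / q = 1 \<longrightarrow> L \<le> boundC p q n nx a ny g) \<and>
          L \<le> boundD n nx a ny g))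
   \<and>
   (\<forall>n (x::'b) (y::nat \<Rightarrow> 'b) z (c::nat \<Rightarrow> complex).
      two_inner_C scC ipC \<and> 0 < n \<longrightarrow>
      (let L = (cmod (\<Sum>i=1..n. c i * ipC x (y i) z))\<^sup>2;
           nx = tnorm_C ipC x z; a = (\<lambda>i. cmod (c i));
           ny = (\<lambda>i. tnorm_C ipC (y i) z); g = (\<lambda>i j. cmod (ipC (y i) (y j) z))
       in L \<le> boundA n nx a ny g \<and> L \<le> boundB n nx a ny g \<and>
          (\<forall>p q. 1 < p \<and> 1 / p + 1 / q = 1 \<longrightarrow> L \<le> boundC p q n nx a ny g) \<and>
          L \<le> boundD n nx a ny g))"
proof (intro conjI allI impI)
  fix n :: nat and x :: 'a and y :: "nat \<Rightarrow> 'a" and z and c :: "nat \<Rightarrow> real"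
  assume h: "two_inner_R ipR \<and> 0 < n"
  have pos: "\<And>u. 0 \<le> ipR u u z" using h unfolding two_inner_R_def by blast
  show "let L = \<bar>\<Sum>i=1..n. c i * ipR x (y i) z\<bar>\<^sup>2;
           nx = tnorm_R ipR x z; a = (\<lambda>i. \<bar>c i\<bar>);
           ny = (\<lambda>i. tnorm_R ipR (y i) z); g = (\<lambda>i j. \<bar>ipR (y i) (y j) z\<bar>)
       in L \<le> boundA n nx a ny g \<and> L \<le> boundB n nx a ny g \<and>
          (\<forall>p q. 1 < p \<and> 1 / p + 1 / q = 1 \<longrightarrow> L \<le> boundC p q n nx a ny g) \<and>
          L \<le> boundD n nx a ny g"
    unfolding Let_def
    apply (rule core)
    subgoal using h by simp
    subgoal by simp
    subgoal by simp
    subgoal using pos unfolding tnorm_R_def by simp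
    subgoal by (rule real_case) (use h in blast)
    done
next
  fix n :: nat and x :: 'b and y :: "nat \<Rightarrow> 'b" and z and c :: "nat \<Rightarrow> complex"
  assume h: "two_inner_C scC ipC \<and> 0 < n"
  have pos: "\<And>u. 0 \<le> Re (ipC u u z)" using h unfolding two_inner_C_def by blast
  show "let L = (cmod (\<Sum>i=1..n. c i * ipC x (y i) z))\<^sup>2;
           nx = tnorm_C ipC x z; a = (\<lambda>i. cmod (c i));
           ny = (\<lambda>i. tnorm_C ipC (y i) z); g = (\<lambda>i j. cmod (ipC (y i) (y j) z))
       in L \<le> boundA n nx a ny g \<and> L \<le> boundB n nx a ny g \<and>
          (\<forall>p q. 1 < p \<and> 1 / p + 1 / q = 1 \<longrightarrow> L \<le> boundC p q n nx a ny g) \<and>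
          L \<le> boundD n nx a ny g"
    unfolding Let_def
    apply (rule core)
    subgoal using h by simp
    subgoal by simp
    subgoal by simp
    subgoal using pos unfolding tnorm_C_def by simp
    subgoal by (rule complex_case) (use h in blast)
    done
qed

end
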